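(* Let $n\ge2$ (prime or composite), $\alpha>1$, $s\ge1$, let $\{\beta_u\}_{u\subseteq\{1:s\}}$ be any family of nonnegative reals, and let $(z_1,\ldots,z_{s-1})\in\mathbb U_n^{s-1}$. Then for all $\lambda\in(\frac1\alpha,1]$, $$\frac1{\varphi(n)}\sum_{z_s\in\mathbb U_n}\big[\theta_{n,s,\alpha}(z_1,\ldots,z_s;\{\beta_u\}_{u\subseteq\{1:s\}})\big]^\lambda\le\frac{\kappa}{\varphi(n)}\Bigg(\sum_{s\in u\subseteq\{1:s\}}\beta_u^\lambda[2\zeta(\alpha\lambda)]^{|u|}\Bigg)\Bigg(\sum_{u\subseteq\{1:s\}}\beta_u^\lambda[2\zeta(\alpha\lambda)]^{|u|}\Bigg),$$ where $\kappa=2^{2\alpha\lambda+1}+1$.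
   Context: $\{1:s\}=\{1,\ldots,s\}$; $\zeta$ is the Riemann zeta function. $\mathbb U_n=\{z\in\mathbb Z:1\le z\le n-1,\gcd(z,n)=1\}$ and $\varphi(n)=|\mathbb U_n|$. For $\mathbf h\in\mathbb Z^s$, $\mathrm{supp}(\mathbf h)=\{j:h_j\ne0\}$ and $r'(\mathbf h)=\prod_{j\in\mathrm{supp}(\mathbf h)}|h_j|^\alpha$. Define $$\theta_{n,s,\alpha}(z_1,\ldots,z_s;\{\beta_u\})=\sum_{\mathbf h\in\mathbb Z^s}\sum_{\substack{\boldsymbol\ell\in\mathbb Z^s,\ \ell_s\ne0\\ \boldsymbol\ell\cdot(z_1,\ldots,z_s)\equiv0\ (\mathrm{mod}\ n)}}\frac{\beta_{\mathrm{supp}(\mathbf h)}}{r'(\mathbf h)}\frac{\beta_{\mathrm{supp}(\mathbf h+\boldsymbol\ell)}}{r'(\mathbf h+\boldsymbol\ell)}.$$ *)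

theory Defs
  imports "HOL-Analysis.Analysis" "HOL-Number_Theory.Number_Theory"
begin

definition zvecs :: "nat \<Rightarrow> (nat \<Rightarrow> int) set" where
  "zvecs s = {h. \<forall>j. j \<notin> {1..s} \<longrightarrow> h j = 0}"

definition Un_set :: "nat \<Rightarrow> int set" where
  "Un_set n = {z. 1 \<le> z \<and> z \<le> int n - 1 \<and> coprime z (int n)}"

definition supp_vec :: "nat \<Rightarrow> (nat \<Rightarrow> int) \<Rightarrow> nat set" where
  "supp_vec s h = {j \<in> {1..s}. h j \<noteq> 0}"

definition rprime :: "nat \<Rightarrow> real \<Rightarrow> (nat \<Rightarrow> int) \<Rightarrow> real" where
  "rprime s \<alpha> h = (\<Prod>j\<in>supp_vec s h. \<bar>real_of_int (h j)\<bar> powr \<alpha>)"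

definition zeta_real :: "real \<Rightarrow> real" where
  "zeta_real x = (\<Sum>k. 1 / (real (Suc k)) powr x)"

definition theta :: "nat \<Rightarrow> nat \<Rightarrow> real \<Rightarrow> (nat \<Rightarrow> int) \<Rightarrow> (nat set \<Rightarrow> real) \<Rightarrow> real" where
  "theta n s \<alpha> z \<beta> =
     (\<Sum>\<^sub>\<infinity>(h, l) \<in> {(h, l). h \<in> zvecs s \<and> l \<in> zvecs s \<and> l s \<noteq> 0 \<and>
                          (\<Sum>j=1..s. l j * z j) mod int n = 0}.
        (\<beta> (supp_vec s h) / rprime s \<alpha> h) *
        (\<beta> (supp_vec s (\<lambda>j. h j + l j)) / rprime s \<alpha> (\<lambda>j. h j + l j)))"

end

theory Submission
  imports Defs
begin


definition Ncnt :: "nat \<Rightarrow> int \<Rightarrow> int \<Rightarrow> nat" where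
  "Ncnt n c l = card {zs \<in> Un_set n. (c + l*zs) mod int n = 0}"

lemma Un_fin: "finite (Un_set n)"
  unfolding Un_set_def by (rule finite_subset[of _ "{1..int n - 1}"]) auto

lemma Ncnt_le_gcd:
  assumes n: "n \<ge> 2"
  shows "int (Ncnt n c l) \<le> gcd l (int n)"
proof -
  define d where "d = gcd l (int n)"
  have dpos: "d > 0" using n by (simp add: d_def)
  define m where "m = int n div d"
  have nm: "int n = d * m" unfolding m_def d_def by simp
  have "0 < d*m" using nm n by linarith
  hence mpos: "m > 0" using dpos by (simp add: zero_less_mult_iff)
  obtain l' where l': "l = d * l'" unfolding d_def by (meson gcd_dvd1 dvdE)
  have cop: "coprime m l'"
  proof -
    have g: "gcd l (int n) = d" by (simp add: d_def)
    have "gcd (d*l') (d*m) = d" using g by (simp only: l' nm)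
    hence "d * gcd l' m = d" using dpos by (simp add: gcd_mult_left)
    hence "gcd m l' = 1" using dpos by (simp add: gcd.commute)
    thus ?thesis by (simp add: coprime_iff_gcd_eq_1)
  qed
  let ?S = "{zs \<in> Un_set n. (c + l*zs) mod int n = 0}"
  have inj: "inj_on (\<lambda>zs. zs div m) ?S"
  proof (rule inj_onI)
    fix x y assume x: "x \<in> ?S" and y: "y \<in> ?S" and e: "x div m = y div m"
    have "int n dvd (c + l*x) - (c + l*y)" using x y by (intro dvd_diff) (auto simp: mod_eq_0_iff_dvd)
    hence "d*m dvd d*(l'*(x-y))" using nm l' by (simp add: algebra_simps)
    moreover have dn: "d \<noteq> 0" using dpos by simp
    ultimately have "m dvd l'*(x-y)" using dvd_times_left_cancel_iff[OF dn] by blast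
    hence "m dvd (x-y)" using cop by (simp add: coprime_dvd_mult_right_iff)
    hence "x mod m = y mod m" by (simp add: mod_eq_dvd_iff)
    thus "x = y" using e by (metis div_mult_mod_eq)
  qed
  have img: "(\<lambda>zs. zs div m) ` ?S \<subseteq> {0..<d}"
  proof (rule image_subsetI)
    fix zs assume zs: "zs \<in> ?S"
    define t where "t = zs div m"
    have z1: "1 \<le> zs" and z2: "zs < d*m" using zs nm unfolding Un_set_def by auto
    have q: "m*(zs div m) + zs mod m = zs" by (rule mult_div_mod_eq)
    have r: "zs mod m \<ge> 0" using mpos by simp
    have t0: "0 \<le> zs div m" using mpos z1 by (simp add: pos_imp_zdiv_nonneg_iff)
    have t1: "zs div m < d"
    proof (rule ccontr)
      assume "\<not> zs div m < d"
      hence "d \<le> zs div m" by simp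
      hence "m*d \<le> m*(zs div m)" using mpos by simp
      thus False using q r z2 by (simp add: mult.commute)
    qed
    show "zs div m \<in> {0..<d}" using t0 t1 by simp
  qed
  have "card ?S \<le> card {0..<d}" by (rule card_inj_on_le[OF inj img]) simp
  thus ?thesis unfolding Ncnt_def d_def[symmetric] using dpos by simp
qed

lemma Ncnt_pos_gcd:
  assumes "Ncnt n c l > 0"
  shows "gcd l (int n) = gcd c (int n)"
proof -
  have "{zs \<in> Un_set n. (c + l*zs) mod int n = 0} \<noteq> {}" using assms unfolding Ncnt_def by (simp add: card_gt_0_iff)
  then obtain zs where zs: "zs \<in> Un_set n" "(c + l*zs) mod int n = 0" by auto
  have cop: "coprime zs (int n)" using zs unfolding Un_set_def by auto
  have "int n dvd c + l*zs" using zs by (simp add: mod_eq_0_iff_dvd)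
  then obtain q where "c + l*zs = int n * q" by (elim dvdE)
  hence q: "c = q * int n + (- (l*zs))" by (simp add: algebra_simps)
  have "gcd (int n) c = gcd (int n) (q * int n + (- (l*zs)))" using q by simp
  also have "\<dots> = gcd (int n) (- (l*zs))" by (rule gcd_add_mult)
  finally have "gcd c (int n) = gcd (l*zs) (int n)" by (simp add: gcd.commute)
  also have "\<dots> = gcd l (int n)" using cop by (simp add: gcd_mult_left_right_cancel coprime_commute)
  finally show ?thesis by simp
qed



definition ap :: "real \<Rightarrow> int \<Rightarrow> real" where
  "ap p x = real_of_int \<bar>x\<bar> powr (- p)"

lemma ap_nonneg: "ap p x \<ge> 0" unfolding ap_def by simp

lemma ap_0[simp]: "ap p 0 = 0" unfolding ap_def by simp

lemma ap_uminus[simp]: "ap p (- x) = ap p x" unfolding ap_def by simp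

lemma zeta_summ:
  assumes "p > 1"
  shows "summable (\<lambda>k. 1 / real (Suc k) powr p)"
proof -
  have "summable (\<lambda>n. real n powr (-p))" using assms by (simp add: summable_real_powr_iff)
  hence "summable (\<lambda>k. real (Suc k) powr (-p))" by (subst summable_Suc_iff)
  thus ?thesis by (simp add: powr_minus_divide)
qed

lemma zeta_nonneg: "p > 1 \<Longrightarrow> zeta_real p \<ge> 0"
  unfolding zeta_real_def by (rule suminf_nonneg[OF zeta_summ]) auto

lemma pos_part_zeta:
  assumes p: "p > 1" and T: "finite T" "T \<subseteq> {t. t \<ge> 0}"
  shows "(\<Sum>t\<in>T. ap p t) \<le> zeta_real p"
proof -
  have "(\<Sum>t\<in>T. ap p t) = (\<Sum>t\<in>T-{0}. ap p t)"
    using T by (intro sum.mono_neutral_right) auto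
  also have "\<dots> = (\<Sum>k\<in>(\<lambda>t. nat t - 1) ` (T-{0}). 1 / real (Suc k) powr p)"
  proof (subst sum.reindex)
    show "inj_on (\<lambda>t. nat t - 1) (T - {0})" proof (rule inj_onI)
      fix x y assume x: "x \<in> T - {0}" and y: "y \<in> T - {0}" and e: "nat x - 1 = nat y - 1"
      have "x > 0" "y > 0" using x y T by auto
      hence a: "int (nat x - 1) = x - 1" and b: "int (nat y - 1) = y - 1" by (simp_all add: of_nat_diff)
      have "x - 1 = y - 1" by (subst a[symmetric], subst b[symmetric]) (use e in simp)
      thus "x = y" by linarith
    qed
    show "(\<Sum>t\<in>T-{0}. ap p t) = (\<Sum>t\<in>T-{0}. ((\<lambda>k. 1 / real (Suc k) powr p) \<circ> (\<lambda>t. nat t - 1)) t)"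
    proof (rule sum.cong)
      fix t assume t: "t \<in> T - {0}"
      hence tp: "t > 0" using T by auto
      hence "real (Suc (nat t - 1)) = real_of_int \<bar>t\<bar>" by simp
      thus "ap p t = ((\<lambda>k. 1 / real (Suc k) powr p) \<circ> (\<lambda>t. nat t - 1)) t"
        unfolding ap_def by (simp add: powr_minus_divide)
    qed simp
  qed
  also have "\<dots> \<le> zeta_real p" unfolding zeta_real_def
    by (rule sum_le_suminf[OF zeta_summ[OF p]]) (use T in auto)
  finally show ?thesis .
qed

lemma partial_zeta:
  assumes p: "p > 1" and T: "finite T"
  shows "(\<Sum>t\<in>T. ap p t) \<le> 2 * zeta_real p"
proof -
  let ?P = "T \<inter> {t. t \<ge> 0}" and ?N = "T - {t. t \<ge> 0}"
  have "(\<Sum>t\<in>T. ap p t) = (\<Sum>t\<in>?P. ap p t) + (\<Sum>t\<in>?N. ap p t)"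
    using T by (simp add: sum.Int_Diff)
  also have "(\<Sum>t\<in>?N. ap p t) = (\<Sum>t\<in>uminus ` ?N. ap p t)"
    by (subst sum.reindex) (auto simp: inj_on_def)
  also have "(\<Sum>t\<in>?P. ap p t) \<le> zeta_real p" by (rule pos_part_zeta) (use p T in auto)
  also have "(\<Sum>t\<in>uminus ` ?N. ap p t) \<le> zeta_real p" by (rule pos_part_zeta) (use p T in auto)
  finally show ?thesis by simp
qed

lemma ap_mult: "ap p (g * t) = ap p g * ap p t"
  unfolding ap_def by (simp add: abs_mult powr_mult)

lemma count_bound:
  assumes n: "n \<ge> 2" and p: "p > 1" and L: "finite L"
  shows "(\<Sum>l\<in>L. ap p l * real (Ncnt n c l)) \<le> 2 * zeta_real p"
proof -
  define g where "g = gcd c (int n)"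
  have g1: "g \<ge> 1" using n unfolding g_def
    by (metis gcd_eq_0_iff gcd_ge_0_int int_one_le_iff_zero_less less_le of_nat_le_0_iff not_numeral_le_zero)
  have step: "ap p l * real (Ncnt n c l) \<le> (if g dvd l then real_of_int g * ap p l else 0)" for l
  proof (cases "Ncnt n c l > 0")
    case True
    hence e: "gcd l (int n) = g" using Ncnt_pos_gcd g_def by blast
    hence "g dvd l" by (metis gcd_dvd1)
    moreover have "real (Ncnt n c l) \<le> real_of_int g" using Ncnt_le_gcd[OF n, of c l] e
      by (metis of_int_le_iff of_int_of_nat_eq)
    ultimately show ?thesis using ap_nonneg[of p l] by (simp add: mult.commute[of "real_of_int g"] mult_left_mono)
  next
    case False
    thus ?thesis using ap_nonneg[of p l] g1 by auto
  qed
  have "(\<Sum>l\<in>L. ap p l * real (Ncnt n c l)) \<le> (\<Sum>l\<in>L. if g dvd l then real_of_int g * ap p l else 0)"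
    by (rule sum_mono) (rule step)
  also have "\<dots> = real_of_int g * (\<Sum>l\<in>{l\<in>L. g dvd l}. ap p l)"
    using L by (simp add: sum.inter_filter[symmetric] sum_distrib_left if_distrib cong: if_cong)
  also have "(\<Sum>l\<in>{l\<in>L. g dvd l}. ap p l) = (\<Sum>t\<in>(\<lambda>l. l div g) ` {l\<in>L. g dvd l}. ap p (g * t))"
  proof (subst sum.reindex)
    show "inj_on (\<lambda>l. l div g) {l \<in> L. g dvd l}" using g1 by (auto simp: inj_on_def elim!: dvdE)
  qed (auto intro!: sum.cong elim!: dvdE simp: g1)
  also have "\<dots> = ap p g * (\<Sum>t\<in>(\<lambda>l. l div g) ` {l\<in>L. g dvd l}. ap p t)"
    by (simp add: ap_mult sum_distrib_left)
  finally have A: "(\<Sum>l\<in>L. ap p l * real (Ncnt n c l)) \<le> (real_of_int g * ap p g) * (\<Sum>t\<in>(\<lambda>l. l div g) ` {l\<in>L. g dvd l}. ap p t)"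
    by (simp add: mult.assoc)
  have B: "(\<Sum>t\<in>(\<lambda>l. l div g) ` {l\<in>L. g dvd l}. ap p t) \<le> 2 * zeta_real p"
    by (rule partial_zeta) (use p L in auto)
  have C: "real_of_int g * ap p g \<le> 1"
  proof -
    have gr: "real_of_int g \<ge> 1" using g1 by simp
    have "real_of_int g = real_of_int g powr 1" using gr by simp
    also have "\<dots> \<le> real_of_int g powr p" using gr p by (intro powr_mono) auto
    finally have le: "real_of_int g \<le> real_of_int g powr p" .
    have apg: "ap p g = 1 / real_of_int g powr p" unfolding ap_def using g1 by (simp add: powr_minus_divide)
    have gp: "real_of_int g powr p > 0" using gr by simp
    have "real_of_int g * ap p g = real_of_int g / real_of_int g powr p" using apg by simp
    also have "\<dots> \<le> 1" using le gp by (simp add: divide_le_eq)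
    finally show ?thesis .
  qed
  have D: "0 \<le> (\<Sum>t\<in>(\<lambda>l. l div g) ` {l\<in>L. g dvd l}. ap p t)" by (rule sum_nonneg) (rule ap_nonneg)
  have "(real_of_int g * ap p g) * (\<Sum>t\<in>(\<lambda>l. l div g) ` {l\<in>L. g dvd l}. ap p t) \<le> 1 * (2 * zeta_real p)"
    using B C D g1 ap_nonneg[of p g] by (intro mult_mono) auto
  thus ?thesis using A by simp
qed

lemma pair_bound:
  assumes p: "p > 1" and xy: "x \<noteq> y"
  shows "ap p x * ap p y \<le> 2 powr p * ap p (y - x) * (ap p x + ap p y)"
proof -
  have key: "ap p u \<le> 2 powr p * ap p (v - u)" if "u \<noteq> 0" "v \<noteq> u" "\<bar>v\<bar> \<le> \<bar>u\<bar>" for u v :: int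
  proof -
    have pos: "real_of_int \<bar>v - u\<bar> / 2 > 0" using that by simp
    have i: "\<bar>v - u\<bar> \<le> 2 * \<bar>u\<bar>" using abs_triangle_ineq4[of v u] that(3) by linarith
    have "real_of_int \<bar>v - u\<bar> \<le> real_of_int (2 * \<bar>u\<bar>)" using i by (simp only: of_int_le_iff)
    hence le: "real_of_int \<bar>v - u\<bar> / 2 \<le> real_of_int \<bar>u\<bar>" by simp
    have "ap p u \<le> (real_of_int \<bar>v - u\<bar> / 2) powr (-p)"
      unfolding ap_def by (rule powr_mono2'[OF _ pos le]) (use p in simp)
    also have "\<dots> = real_of_int \<bar>v - u\<bar> powr (-p) / 2 powr (-p)" by (rule powr_divide)
    also have "\<dots> = real_of_int \<bar>v - u\<bar> powr (-p) * 2 powr p" by (simp add: powr_minus divide_inverse)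
    also have "\<dots> = 2 powr p * ap p (v - u)" unfolding ap_def by (rule mult.commute)
    finally show ?thesis .
  qed
  show ?thesis
  proof (cases "x = 0 \<or> y = 0")
    case True
    thus ?thesis using ap_nonneg[of p] by (auto intro!: mult_nonneg_nonneg add_nonneg_nonneg)
  next
    case False
    hence x0: "x \<noteq> 0" and y0: "y \<noteq> 0" by auto
    have c2: "0 \<le> 2 powr p * ap p (y - x)" using ap_nonneg[of p] by simp
    show ?thesis
    proof (cases "\<bar>y\<bar> \<le> \<bar>x\<bar>")
      case True
      have "ap p x * ap p y \<le> (2 powr p * ap p (y - x)) * ap p y"
        using key[OF x0 xy[symmetric] True] ap_nonneg[of p y] by (rule mult_right_mono)
      also have "\<dots> \<le> (2 powr p * ap p (y - x)) * (ap p x + ap p y)"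
        using c2 ap_nonneg[of p x] by (intro mult_left_mono) auto
      finally show ?thesis .
    next
      case False
      hence F: "\<bar>x\<bar> \<le> \<bar>y\<bar>" by simp
      have "ap p (x - y) = ap p (y - x)" by (metis ap_uminus minus_diff_eq)
      hence "ap p y \<le> 2 powr p * ap p (y - x)" using key[OF y0 xy F] by simp
      hence "ap p x * ap p y \<le> ap p x * (2 powr p * ap p (y - x))"
        using ap_nonneg[of p x] by (rule mult_left_mono)
      also have "\<dots> \<le> (ap p x + ap p y) * (2 powr p * ap p (y - x))"
        using c2 ap_nonneg[of p y] by (intro mult_right_mono) auto
      also have "\<dots> = (2 powr p * ap p (y - x)) * (ap p x + ap p y)" by (rule mult.commute)
      finally show ?thesis .
    qed
  qed
qed



lemma cb_img:
  assumes n: "n \<ge> 2" and p: "p > 1" and I: "finite I" and inj: "inj_on h I"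
  shows "(\<Sum>y\<in>I. ap p (h y) * real (Ncnt n c (h y))) \<le> 2 * zeta_real p"
proof -
  have "(\<Sum>y\<in>I. ap p (h y) * real (Ncnt n c (h y))) = (\<Sum>l\<in>h ` I. ap p l * real (Ncnt n c l))"
    using inj by (simp add: sum.reindex)
  also have "\<dots> \<le> 2 * zeta_real p" by (rule count_bound[OF n p]) (use I in simp)
  finally show ?thesis .
qed

lemma one_dim:
  assumes n: "n \<ge> 2" and p: "p > 1" and I: "finite I"
    and h0: "H0 \<ge> 0" and h1: "H1 \<ge> 0" and k0: "K0 \<ge> 0" and k1: "K1 \<ge> 0"
  shows "(\<Sum>x\<in>I. \<Sum>y\<in>I. (H0 * (if x = 0 then 1 else 0) + H1 * ap p x) *
            (K0 * (if y = 0 then 1 else 0) + K1 * ap p y) *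
            (if y \<noteq> x then real (Ncnt n c (y - x)) else 0))
     \<le> (2 * zeta_real p) * (H0 * K1 + H1 * K0) + 2 powr (p + 1) * (2 * zeta_real p)^2 * (H1 * K1)"
proof -
  define Z where "Z = 2 * zeta_real p"
  define N where "N l = real (Ncnt n c l)" for l
  define d where "d x = (if x = (0::int) then (1::real) else 0)" for x
  have Nn: "N l \<ge> 0" for l unfolding N_def by simp
  have dn: "d x \<ge> 0" for x unfolding d_def by simp
  have an: "ap p x \<ge> 0" for x by (rule ap_nonneg)
  have Z0: "Z \<ge> 0" unfolding Z_def using zeta_nonneg[OF p] by simp
  let ?T = "\<lambda>x y. (H0 * d x + H1 * ap p x) * (K0 * d y + K1 * ap p y) * (if y \<noteq> x then N (y - x) else 0)"
  let ?R = "\<lambda>x y. H0 * K1 * (d x * (ap p y * N (y - x))) + H1 * K0 * (d y * (ap p x * N (y - x)))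
              + H1 * K1 * 2 powr p * (ap p (y - x) * N (y - x) * ap p x + ap p (y - x) * N (y - x) * ap p y)"
  have pt: "?T x y \<le> ?R x y" for x y
  proof (cases "y = x")
    case True
    have "0 \<le> ?R x y" using h0 h1 k0 k1 Nn dn an by (intro add_nonneg_nonneg mult_nonneg_nonneg) auto
    thus ?thesis using True by simp
  next
    case False
    have dd: "d x * d y = 0" using False unfolding d_def by auto
    have e: "?T x y = H0 * K1 * (d x * (ap p y * N (y - x))) + H1 * K0 * (d y * (ap p x * N (y - x)))
                + H1 * K1 * (ap p x * ap p y) * N (y - x) + H0 * K0 * (d x * d y) * N (y - x)"
      using False by (simp add: algebra_simps)
    have pb: "ap p x * ap p y \<le> 2 powr p * ap p (y - x) * (ap p x + ap p y)"
      by (rule pair_bound[OF p]) (use False in auto)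
    have "H1 * K1 * (ap p x * ap p y) * N (y - x) \<le> H1 * K1 * (2 powr p * ap p (y - x) * (ap p x + ap p y)) * N (y - x)"
      using pb h1 k1 Nn by (intro mult_right_mono mult_left_mono) auto
    also have "\<dots> = H1 * K1 * 2 powr p * (ap p (y - x) * N (y - x) * ap p x + ap p (y - x) * N (y - x) * ap p y)"
      by (simp add: algebra_simps)
    finally show ?thesis using e dd by simp
  qed
  have SA: "(\<Sum>x\<in>I. \<Sum>y\<in>I. d x * (ap p y * N (y - x))) \<le> Z"
  proof -
    have "(\<Sum>x\<in>I. \<Sum>y\<in>I. d x * (ap p y * N (y - x))) = (\<Sum>x\<in>I. if x = 0 then (\<Sum>y\<in>I. ap p y * N y) else 0)"
      by (rule sum.cong) (auto simp: d_def)
    also have "\<dots> = (if 0 \<in> I then (\<Sum>y\<in>I. ap p y * N y) else 0)" using I by (simp add: sum.delta)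
    also have "\<dots> \<le> Z"
      using cb_img[OF n p I, of "\<lambda>y. y" c] Z0 unfolding Z_def N_def by auto
    finally show ?thesis .
  qed
  have SB: "(\<Sum>x\<in>I. \<Sum>y\<in>I. d y * (ap p x * N (y - x))) \<le> Z"
  proof -
    have "(\<Sum>x\<in>I. \<Sum>y\<in>I. d y * (ap p x * N (y - x))) = (\<Sum>x\<in>I. if 0 \<in> I then ap p x * N (0 - x) else 0)"
    proof (rule sum.cong)
      fix x assume "x \<in> I"
      have "(\<Sum>y\<in>I. d y * (ap p x * N (y - x))) = (\<Sum>y\<in>I. if y = 0 then ap p x * N (y - x) else 0)"
        by (rule sum.cong) (auto simp: d_def)
      also have "\<dots> = (if 0 \<in> I then ap p x * N (0 - x) else 0)" using I by (simp add: sum.delta)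
      finally show "(\<Sum>y\<in>I. d y * (ap p x * N (y - x))) = (if 0 \<in> I then ap p x * N (0 - x) else 0)" .
    qed simp
    also have "\<dots> \<le> (\<Sum>x\<in>I. ap p (- x) * N (- x))"
      using an Nn by (intro sum_mono) auto
    also have "\<dots> \<le> Z"
      using cb_img[OF n p I, of "\<lambda>x. - x" c] unfolding Z_def N_def by (simp add: inj_on_def)
    finally show ?thesis .
  qed
  have SC: "(\<Sum>x\<in>I. \<Sum>y\<in>I. ap p (y - x) * N (y - x) * ap p x) \<le> Z * Z"
  proof -
    have "(\<Sum>x\<in>I. \<Sum>y\<in>I. ap p (y - x) * N (y - x) * ap p x) = (\<Sum>x\<in>I. ap p x * (\<Sum>y\<in>I. ap p (y - x) * N (y - x)))"
      by (simp add: sum_distrib_left mult.commute)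
    also have "\<dots> \<le> (\<Sum>x\<in>I. ap p x * Z)"
    proof (rule sum_mono)
      fix x assume "x \<in> I"
      have "(\<Sum>y\<in>I. ap p (y - x) * N (y - x)) \<le> Z"
        using cb_img[OF n p I, of "\<lambda>y. y - x" c] unfolding Z_def N_def by (simp add: inj_on_def)
      thus "ap p x * (\<Sum>y\<in>I. ap p (y - x) * N (y - x)) \<le> ap p x * Z" using an by (rule mult_left_mono)
    qed
    also have "\<dots> = (\<Sum>x\<in>I. ap p x) * Z" by (simp add: sum_distrib_right)
    also have "\<dots> \<le> Z * Z" using partial_zeta[OF p I] Z0 unfolding Z_def by (intro mult_right_mono) auto
    finally show ?thesis .
  qed
  have SD: "(\<Sum>x\<in>I. \<Sum>y\<in>I. ap p (y - x) * N (y - x) * ap p y) \<le> Z * Z"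
  proof -
    have "(\<Sum>x\<in>I. \<Sum>y\<in>I. ap p (y - x) * N (y - x) * ap p y) = (\<Sum>y\<in>I. \<Sum>x\<in>I. ap p (y - x) * N (y - x) * ap p y)"
      by (rule sum.swap)
    also have "\<dots> = (\<Sum>y\<in>I. ap p y * (\<Sum>x\<in>I. ap p (y - x) * N (y - x)))"
      by (simp add: sum_distrib_left mult.commute)
    also have "\<dots> \<le> (\<Sum>y\<in>I. ap p y * Z)"
    proof (rule sum_mono)
      fix y assume "y \<in> I"
      have "(\<Sum>x\<in>I. ap p (y - x) * N (y - x)) \<le> Z"
        using cb_img[OF n p I, of "\<lambda>x. y - x" c] unfolding Z_def N_def by (simp add: inj_on_def)
      thus "ap p y * (\<Sum>x\<in>I. ap p (y - x) * N (y - x)) \<le> ap p y * Z" using an by (rule mult_left_mono)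
    qed
    also have "\<dots> = (\<Sum>y\<in>I. ap p y) * Z" by (simp add: sum_distrib_right)
    also have "\<dots> \<le> Z * Z" using partial_zeta[OF p I] Z0 unfolding Z_def by (intro mult_right_mono) auto
    finally show ?thesis .
  qed
  have "(\<Sum>x\<in>I. \<Sum>y\<in>I. ?T x y) \<le> (\<Sum>x\<in>I. \<Sum>y\<in>I. ?R x y)"
    by (intro sum_mono pt)
  also have "\<dots> = H0 * K1 * (\<Sum>x\<in>I. \<Sum>y\<in>I. d x * (ap p y * N (y - x)))
      + H1 * K0 * (\<Sum>x\<in>I. \<Sum>y\<in>I. d y * (ap p x * N (y - x)))
      + H1 * K1 * 2 powr p * ((\<Sum>x\<in>I. \<Sum>y\<in>I. ap p (y - x) * N (y - x) * ap p x)
                             + (\<Sum>x\<in>I. \<Sum>y\<in>I. ap p (y - x) * N (y - x) * ap p y))"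
    by (simp add: sum.distrib sum_distrib_left distrib_left)
  also have "\<dots> \<le> H0 * K1 * Z + H1 * K0 * Z + H1 * K1 * 2 powr p * (Z * Z + Z * Z)"
  proof -
    have a: "H0 * K1 * (\<Sum>x\<in>I. \<Sum>y\<in>I. d x * (ap p y * N (y - x))) \<le> H0 * K1 * Z"
      using SA h0 k1 by (intro mult_left_mono) auto
    have b: "H1 * K0 * (\<Sum>x\<in>I. \<Sum>y\<in>I. d y * (ap p x * N (y - x))) \<le> H1 * K0 * Z"
      using SB h1 k0 by (intro mult_left_mono) auto
    have c: "H1 * K1 * 2 powr p * ((\<Sum>x\<in>I. \<Sum>y\<in>I. ap p (y - x) * N (y - x) * ap p x)
                             + (\<Sum>x\<in>I. \<Sum>y\<in>I. ap p (y - x) * N (y - x) * ap p y)) \<le> H1 * K1 * 2 powr p * (Z * Z + Z * Z)"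
      using SC SD h1 k1 by (intro mult_left_mono add_mono) auto
    show ?thesis using a b c by linarith
  qed
  also have "\<dots> = Z * (H0 * K1 + H1 * K0) + 2 powr (p + 1) * Z^2 * (H1 * K1)"
    by (simp add: powr_add power2_eq_square algebra_simps)
  finally show ?thesis unfolding Z_def d_def N_def .
qed



definition zbox :: "nat set \<Rightarrow> int \<Rightarrow> (nat \<Rightarrow> int) set" where
  "zbox J M = {h. (\<forall>j\<in>J. \<bar>h j\<bar> \<le> M) \<and> (\<forall>j. j \<notin> J \<longrightarrow> h j = 0)}"

lemma box_empty: "zbox {} M = {\<lambda>_. 0}"
  unfolding zbox_def by auto

lemma box_insert:
  assumes "i \<notin> J"
  shows "zbox (insert i J) M = (\<lambda>(h, x). h(i := x)) ` (zbox J M \<times> {-M..M})"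
proof
  show "zbox (insert i J) M \<subseteq> (\<lambda>(h, x). h(i := x)) ` (zbox J M \<times> {-M..M})"
  proof
    fix h assume h: "h \<in> zbox (insert i J) M"
    have "h(i := 0) \<in> zbox J M" using h assms unfolding zbox_def by auto
    moreover have "h i \<in> {-M..M}" using h unfolding zbox_def by auto
    moreover have "h = (h(i := 0))(i := h i)" by simp
    ultimately show "h \<in> (\<lambda>(h, x). h(i := x)) ` (zbox J M \<times> {-M..M})"
      by (intro image_eqI[where x="(h(i:=0), h i)"]) auto
  qed
next
  show "(\<lambda>(h, x). h(i := x)) ` (zbox J M \<times> {-M..M}) \<subseteq> zbox (insert i J) M"
    unfolding zbox_def by auto
qed

lemma box_insert_inj:
  assumes "i \<notin> J"
  shows "inj_on (\<lambda>(h, x). h(i := x)) (zbox J M \<times> {-M..M})"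
proof (rule inj_onI, clarify)
  fix h x h' x'
  assume h: "h \<in> zbox J M" and h': "h' \<in> zbox J M" and e: "h(i := x) = h'(i := x')"
  have "x = x'" using fun_cong[OF e, of i] by simp
  moreover have "h = h'"
  proof
    fix j show "h j = h' j"
    proof (cases "j = i")
      case True thus ?thesis using h h' assms unfolding zbox_def by auto
    next
      case False thus ?thesis using fun_cong[OF e, of j] by simp
    qed
  qed
  ultimately show "h = h' \<and> x = x'" by simp
qed

lemma finite_box: "finite J \<Longrightarrow> finite (zbox J M)"
proof (induction J rule: finite_induct)
  case empty thus ?case by (simp add: box_empty)
next
  case (insert i J) thus ?case by (simp add: box_insert)
qed

lemma sum_box_insert:
  assumes "finite J" "i \<notin> J"
  shows "(\<Sum>h\<in>zbox (insert i J) M. f h) = (\<Sum>h\<in>zbox J M. \<Sum>x\<in>{-M..M}. f (h(i := x)))"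
proof -
  have "(\<Sum>h\<in>zbox (insert i J) M. f h) = (\<Sum>q\<in>zbox J M \<times> {-M..M}. f ((\<lambda>(h, x). h(i := x)) q))"
    unfolding box_insert[OF assms(2)] by (rule sum.reindex[OF box_insert_inj[OF assms(2)], unfolded comp_def])
  also have "\<dots> = (\<Sum>h\<in>zbox J M. \<Sum>x\<in>{-M..M}. f (h(i := x)))"
    by (simp add: sum.cartesian_product split_def)
  finally show ?thesis .
qed

lemma box_weighted:
  assumes p: "p > 1" and J: "finite J" and F: "\<And>u. F u \<ge> 0"
  shows "(\<Sum>h\<in>zbox J M. F {j\<in>J. h j \<noteq> 0} * (\<Prod>j\<in>{j\<in>J. h j \<noteq> 0}. ap p (h j)))
         \<le> (\<Sum>u\<in>Pow J. F u * (2 * zeta_real p) ^ card u)"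
  using J F
proof (induction J arbitrary: F rule: finite_induct)
  case empty
  thus ?case by (simp add: box_empty)
next
  case (insert i J)
  define Z where "Z = 2 * zeta_real p"
  have Z0: "Z \<ge> 0" unfolding Z_def using zeta_nonneg[OF p] by simp
  let ?S = "\<lambda>h. {j\<in>J. h j \<noteq> 0}"
  let ?P = "\<lambda>h. (\<Prod>j\<in>?S h. ap p (h j))"
  have Pn: "?P h \<ge> 0" for h by (rule prod_nonneg) (simp add: ap_nonneg)
  have inner: "(\<Sum>x\<in>{-M..M}. F {j\<in>insert i J. (h(i:=x)) j \<noteq> 0} * (\<Prod>j\<in>{j\<in>insert i J. (h(i:=x)) j \<noteq> 0}. ap p ((h(i:=x)) j)))
      \<le> F (?S h) * ?P h + Z * (F (insert i (?S h)) * ?P h)" if h: "h \<in> zbox J M" for h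
  proof -
    have hi: "h i = 0" using h insert.hyps unfolding zbox_def by auto
    have e: "F {j\<in>insert i J. (h(i:=x)) j \<noteq> 0} * (\<Prod>j\<in>{j\<in>insert i J. (h(i:=x)) j \<noteq> 0}. ap p ((h(i:=x)) j))
        = (if x = 0 then F (?S h) * ?P h else F (insert i (?S h)) * ?P h * ap p x)" for x
    proof (cases "x = 0")
      case True
      have s: "{j\<in>insert i J. (h(i:=x)) j \<noteq> 0} = ?S h" using True hi insert.hyps by auto
      have "(\<Prod>j\<in>?S h. ap p ((h(i:=x)) j)) = ?P h" using insert.hyps by (intro prod.cong) auto
      thus ?thesis using s True by simp
    next
      case False
      have s: "{j\<in>insert i J. (h(i:=x)) j \<noteq> 0} = insert i (?S h)" using False by auto
      have ni: "i \<notin> ?S h" using insert.hyps by auto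
      have "(\<Prod>j\<in>insert i (?S h). ap p ((h(i:=x)) j)) = ap p x * (\<Prod>j\<in>?S h. ap p ((h(i:=x)) j))"
        using ni insert.hyps by (simp add: prod.insert)
      also have "(\<Prod>j\<in>?S h. ap p ((h(i:=x)) j)) = ?P h" using insert.hyps by (intro prod.cong) auto
      finally show ?thesis using s False by (simp add: mult.commute mult.left_commute)
    qed
    have "(\<Sum>x\<in>{-M..M}. F {j\<in>insert i J. (h(i:=x)) j \<noteq> 0} * (\<Prod>j\<in>{j\<in>insert i J. (h(i:=x)) j \<noteq> 0}. ap p ((h(i:=x)) j)))
        = (\<Sum>x\<in>{-M..M}. (if x = 0 then F (?S h) * ?P h else F (insert i (?S h)) * ?P h * ap p x))"
      using e by simp
    also have "\<dots> \<le> (\<Sum>x\<in>{-M..M}. (if x = 0 then F (?S h) * ?P h else 0) + F (insert i (?S h)) * ?P h * ap p x)"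
      using insert.prems Pn by (intro sum_mono) (auto simp: ap_nonneg)
    also have "\<dots> = (if 0 \<in> {-M..M} then F (?S h) * ?P h else 0) + F (insert i (?S h)) * ?P h * (\<Sum>x\<in>{-M..M}. ap p x)"
      by (simp add: sum.distrib sum_distrib_left sum.delta)
    also have "\<dots> \<le> F (?S h) * ?P h + F (insert i (?S h)) * ?P h * Z"
      using partial_zeta[OF p, of "{-M..M}"] insert.prems Pn unfolding Z_def
      by (intro add_mono mult_left_mono) (auto intro: mult_nonneg_nonneg)
    finally show ?thesis by (simp add: mult.commute)
  qed
  have "(\<Sum>h\<in>zbox (insert i J) M. F {j\<in>insert i J. h j \<noteq> 0} * (\<Prod>j\<in>{j\<in>insert i J. h j \<noteq> 0}. ap p (h j)))
      = (\<Sum>h\<in>zbox J M. \<Sum>x\<in>{-M..M}. F {j\<in>insert i J. (h(i:=x)) j \<noteq> 0} * (\<Prod>j\<in>{j\<in>insert i J. (h(i:=x)) j \<noteq> 0}. ap p ((h(i:=x)) j)))"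
    by (rule sum_box_insert[OF insert.hyps])
  also have "\<dots> \<le> (\<Sum>h\<in>zbox J M. F (?S h) * ?P h + Z * (F (insert i (?S h)) * ?P h))"
    by (intro sum_mono inner)
  also have "\<dots> = (\<Sum>h\<in>zbox J M. F (?S h) * ?P h) + Z * (\<Sum>h\<in>zbox J M. F (insert i (?S h)) * ?P h)"
    by (simp add: sum.distrib sum_distrib_left)
  also have "\<dots> \<le> (\<Sum>u\<in>Pow J. F u * Z ^ card u) + Z * (\<Sum>u\<in>Pow J. F (insert i u) * Z ^ card u)"
    using insert.IH[of F] insert.IH[of "\<lambda>u. F (insert i u)"] insert.prems Z0 unfolding Z_def
    by (intro add_mono mult_left_mono) auto
  also have "\<dots> = (\<Sum>u\<in>Pow (insert i J). F u * Z ^ card u)"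
  proof -
    have disj: "Pow J \<inter> insert i ` Pow J = {}" using insert.hyps by auto
    have inj: "inj_on (insert i) (Pow J)" using insert.hyps unfolding inj_on_def
      by (metis Pow_iff insert_ident subset_iff)
    have "(\<Sum>u\<in>Pow (insert i J). F u * Z ^ card u) = (\<Sum>u\<in>Pow J. F u * Z ^ card u) + (\<Sum>u\<in>insert i ` Pow J. F u * Z ^ card u)"
      unfolding Pow_insert using disj insert.hyps by (intro sum.union_disjoint) auto
    also have "(\<Sum>u\<in>insert i ` Pow J. F u * Z ^ card u) = (\<Sum>u\<in>Pow J. F (insert i u) * Z ^ card (insert i u))"
      using inj by (simp add: sum.reindex)
    also have "\<dots> = Z * (\<Sum>u\<in>Pow J. F (insert i u) * Z ^ card u)"
    proof -
      have "F (insert i u) * Z ^ card (insert i u) = Z * (F (insert i u) * Z ^ card u)" if "u \<in> Pow J" for u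
      proof -
        have "finite u" "i \<notin> u" using that insert.hyps finite_subset by auto
        thus ?thesis by simp
      qed
      thus ?thesis unfolding sum_distrib_left by (intro sum.cong) auto
    qed
    finally show ?thesis by simp
  qed
  finally show ?case unfolding Z_def .
qed



definition wt :: "nat \<Rightarrow> real \<Rightarrow> real \<Rightarrow> (nat set \<Rightarrow> real) \<Rightarrow> (nat \<Rightarrow> int) \<Rightarrow> real" where
  "wt s p lam \<beta> h = \<beta> (supp_vec s h) powr lam * (\<Prod>j\<in>supp_vec s h. ap p (h j))"

lemma wt_nonneg: "wt s p lam \<beta> h \<ge> 0"
  unfolding wt_def by (intro mult_nonneg_nonneg prod_nonneg) (auto simp: ap_nonneg)

lemma wt_split:
  assumes s: "s \<ge> 1" and h: "h \<in> zbox {1..s-1} M"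
  shows "wt s p lam \<beta> (h(s := x)) =
    (\<beta> {j\<in>{1..s-1}. h j \<noteq> 0} powr lam * (\<Prod>j\<in>{j\<in>{1..s-1}. h j \<noteq> 0}. ap p (h j))) * (if x = 0 then 1 else 0)
  + (\<beta> (insert s {j\<in>{1..s-1}. h j \<noteq> 0}) powr lam * (\<Prod>j\<in>{j\<in>{1..s-1}. h j \<noteq> 0}. ap p (h j))) * ap p x"
proof -
  let ?S = "{j\<in>{1..s-1}. h j \<noteq> 0}"
  have hs: "h s = 0" using h s unfolding zbox_def by auto
  have pc: "(\<Prod>j\<in>?S. ap p ((h(s:=x)) j)) = (\<Prod>j\<in>?S. ap p (h j))" by (intro prod.cong) auto
  show ?thesis
  proof (cases "x = 0")
    case True
    have "supp_vec s (h(s := x)) = ?S" using True s unfolding supp_vec_def by auto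
    thus ?thesis unfolding wt_def using True pc by simp
  next
    case False
    have sv: "supp_vec s (h(s := x)) = insert s ?S" using False s unfolding supp_vec_def by auto
    have ni: "s \<notin> ?S" by auto
    have "(\<Prod>j\<in>insert s ?S. ap p ((h(s:=x)) j)) = ap p x * (\<Prod>j\<in>?S. ap p ((h(s:=x)) j))"
      using ni by (simp add: prod.insert)
    thus ?thesis unfolding wt_def sv using False pc by (simp add: mult.commute mult.left_commute)
  qed
qed

lemma finite_main:
  assumes n: "n \<ge> 2" and p: "p > 1" and s: "s \<ge> 1"
  shows "(\<Sum>h\<in>zbox {1..s} M. \<Sum>k\<in>zbox {1..s} M. \<Sum>zs\<in>Un_set n.
            (if k s \<noteq> h s \<and> (\<Sum>j=1..s. (k j - h j) * (z(s := zs)) j) mod int n = 0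
             then wt s p lam \<beta> h * wt s p lam \<beta> k else 0))
     \<le> (2 powr (2 * p + 1) + 1) *
        (\<Sum>u\<in>{u. u \<subseteq> {1..s} \<and> s \<in> u}. \<beta> u powr lam * (2 * zeta_real p) ^ card u) *
        (\<Sum>u\<in>{u. u \<subseteq> {1..s}}. \<beta> u powr lam * (2 * zeta_real p) ^ card u)"
proof -
  define J where "J = {1..s-1}"
  have J: "finite J" "s \<notin> J" unfolding J_def by auto
  have sJ: "{1..s} = insert s J" unfolding J_def using s by auto
  define Z where "Z = 2 * zeta_real p"
  have Z0: "Z \<ge> 0" unfolding Z_def using zeta_nonneg[OF p] by simp
  define I where "I = {-M..M}"
  have I: "finite I" unfolding I_def by simp
  define S where "S h = {j\<in>J. h j \<noteq> (0::int)}" for h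
  define H0 where "H0 h = \<beta> (S h) powr lam * (\<Prod>j\<in>S h. ap p (h j))" for h
  define H1 where "H1 h = \<beta> (insert s (S h)) powr lam * (\<Prod>j\<in>S h. ap p (h j))" for h
  have H0n: "H0 h \<ge> 0" for h unfolding H0_def by (intro mult_nonneg_nonneg prod_nonneg) (auto simp: ap_nonneg)
  have H1n: "H1 h \<ge> 0" for h unfolding H1_def by (intro mult_nonneg_nonneg prod_nonneg) (auto simp: ap_nonneg)
  define d where "d x = (if x = (0::int) then (1::real) else 0)" for x
  define c where "c h k = (\<Sum>j\<in>J. (k j - h j) * z j)" for h k :: "nat \<Rightarrow> int"
  let ?F = "\<lambda>h k. \<Sum>zs\<in>Un_set n. (if k s \<noteq> h s \<and> (\<Sum>j=1..s. (k j - h j) * (z(s := zs)) j) mod int n = 0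
             then wt s p lam \<beta> h * wt s p lam \<beta> k else 0)"
  have wsplit: "wt s p lam \<beta> (h(s := x)) = H0 h * d x + H1 h * ap p x" if "h \<in> zbox J M" for h x
    using wt_split[OF s, of h M p lam \<beta> x] that unfolding H0_def H1_def S_def d_def J_def by simp
  have Fsplit: "?F (h(s := x)) (k(s := y)) = (H0 h * d x + H1 h * ap p x) * (H0 k * d y + H1 k * ap p y) *
        (if y \<noteq> x then real (Ncnt n (c h k) (y - x)) else 0)"
    if h: "h \<in> zbox J M" and k: "k \<in> zbox J M" for h k x y
  proof -
    have sumeq: "(\<Sum>j=1..s. ((k(s:=y)) j - (h(s:=x)) j) * (z(s := zs)) j) = c h k + (y - x) * zs" for zs
    proof -
      have "(\<Sum>j=1..s. ((k(s:=y)) j - (h(s:=x)) j) * (z(s := zs)) j)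
          = (y - x) * zs + (\<Sum>j\<in>J. ((k(s:=y)) j - (h(s:=x)) j) * (z(s := zs)) j)"
        unfolding sJ using J by (simp add: sum.insert)
      also have "(\<Sum>j\<in>J. ((k(s:=y)) j - (h(s:=x)) j) * (z(s := zs)) j) = c h k"
        unfolding c_def using J by (intro sum.cong) auto
      finally show ?thesis by simp
    qed
    have "?F (h(s := x)) (k(s := y)) = (\<Sum>zs\<in>Un_set n. (if y \<noteq> x \<and> (c h k + (y - x) * zs) mod int n = 0
             then wt s p lam \<beta> (h(s := x)) * wt s p lam \<beta> (k(s := y)) else 0))"
      using sumeq by simp
    also have "\<dots> = (if y \<noteq> x then wt s p lam \<beta> (h(s := x)) * wt s p lam \<beta> (k(s := y)) * real (Ncnt n (c h k) (y - x)) else 0)"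
    proof (cases "y \<noteq> x")
      case True
      have "(\<Sum>zs\<in>Un_set n. (if y \<noteq> x \<and> (c h k + (y - x) * zs) mod int n = 0
             then wt s p lam \<beta> (h(s := x)) * wt s p lam \<beta> (k(s := y)) else 0))
          = (\<Sum>zs\<in>{zs\<in>Un_set n. (c h k + (y - x) * zs) mod int n = 0}. wt s p lam \<beta> (h(s := x)) * wt s p lam \<beta> (k(s := y)))"
        using True Un_fin[of n] by (subst sum.inter_filter) auto
      thus ?thesis using True unfolding Ncnt_def by (simp add: mult.commute)
    qed simp
    finally show ?thesis using wsplit[OF h] wsplit[OF k] by (simp add: mult.assoc)
  qed
  have "(\<Sum>h\<in>zbox {1..s} M. \<Sum>k\<in>zbox {1..s} M. ?F h k)
      = (\<Sum>h\<in>zbox J M. \<Sum>x\<in>I. \<Sum>k\<in>zbox J M. \<Sum>y\<in>I. ?F (h(s := x)) (k(s := y)))"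
    unfolding sJ I_def by (simp add: sum_box_insert[OF J])
  also have "\<dots> = (\<Sum>h\<in>zbox J M. \<Sum>k\<in>zbox J M. \<Sum>x\<in>I. \<Sum>y\<in>I. ?F (h(s := x)) (k(s := y)))"
    by (intro sum.cong refl) (rule sum.swap)
  also have "\<dots> = (\<Sum>h\<in>zbox J M. \<Sum>k\<in>zbox J M. \<Sum>x\<in>I. \<Sum>y\<in>I.
        (H0 h * d x + H1 h * ap p x) * (H0 k * d y + H1 k * ap p y) *
        (if y \<noteq> x then real (Ncnt n (c h k) (y - x)) else 0))"
    by (intro sum.cong refl) (simp only: Fsplit)
  also have "\<dots> \<le> (\<Sum>h\<in>zbox J M. \<Sum>k\<in>zbox J M. Z * (H0 h * H1 k + H1 h * H0 k) + 2 powr (p + 1) * Z^2 * (H1 h * H1 k))"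
    unfolding Z_def d_def
    by (intro sum_mono one_dim[OF n p I] H0n H1n)
  also have "\<dots> = Z * ((\<Sum>h\<in>zbox J M. H0 h) * (\<Sum>k\<in>zbox J M. H1 k) + (\<Sum>h\<in>zbox J M. H1 h) * (\<Sum>k\<in>zbox J M. H0 k))
      + 2 powr (p + 1) * Z^2 * ((\<Sum>h\<in>zbox J M. H1 h) * (\<Sum>k\<in>zbox J M. H1 k))"
    unfolding sum_product by (simp only: sum.distrib sum_distrib_left distrib_left)
  finally have A0: "(\<Sum>h\<in>zbox {1..s} M. \<Sum>k\<in>zbox {1..s} M. ?F h k)
     \<le> Z * ((\<Sum>h\<in>zbox J M. H0 h) * (\<Sum>k\<in>zbox J M. H1 k) + (\<Sum>h\<in>zbox J M. H1 h) * (\<Sum>k\<in>zbox J M. H0 k))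
      + 2 powr (p + 1) * Z^2 * ((\<Sum>h\<in>zbox J M. H1 h) * (\<Sum>k\<in>zbox J M. H1 k))" .
  have A: "(\<Sum>h\<in>zbox {1..s} M. \<Sum>k\<in>zbox {1..s} M. ?F h k)
     \<le> Z * (2 * (\<Sum>h\<in>zbox J M. H0 h) * (\<Sum>h\<in>zbox J M. H1 h)) + 2 powr (p + 1) * Z^2 * ((\<Sum>h\<in>zbox J M. H1 h) * (\<Sum>h\<in>zbox J M. H1 h))"
  proof -
    have eq: "Z * ((\<Sum>h\<in>zbox J M. H0 h) * (\<Sum>k\<in>zbox J M. H1 k) + (\<Sum>h\<in>zbox J M. H1 h) * (\<Sum>k\<in>zbox J M. H0 k))
       = Z * (2 * (\<Sum>h\<in>zbox J M. H0 h) * (\<Sum>h\<in>zbox J M. H1 h))" by (simp add: algebra_simps)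
    show ?thesis using A0 unfolding eq .
  qed
  define T0 where "T0 = (\<Sum>u\<in>Pow J. \<beta> u powr lam * Z ^ card u)"
  define T1 where "T1 = (\<Sum>u\<in>Pow J. \<beta> (insert s u) powr lam * Z ^ card u)"
  have S0: "(\<Sum>h\<in>zbox J M. H0 h) \<le> T0"
    unfolding H0_def S_def T0_def Z_def by (rule box_weighted[OF p J(1)]) simp
  have S1: "(\<Sum>h\<in>zbox J M. H1 h) \<le> T1"
    unfolding H1_def S_def T1_def Z_def by (rule box_weighted[OF p J(1), of "\<lambda>u. \<beta> (insert s u) powr lam"]) simp
  have S0n: "0 \<le> (\<Sum>h\<in>zbox J M. H0 h)" by (intro sum_nonneg H0n)
  have S1n: "0 \<le> (\<Sum>h\<in>zbox J M. H1 h)" by (intro sum_nonneg H1n)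
  have T0n: "T0 \<ge> 0" unfolding T0_def using Z0 by (intro sum_nonneg mult_nonneg_nonneg) auto
  have T1n: "T1 \<ge> 0" unfolding T1_def using Z0 by (intro sum_nonneg mult_nonneg_nonneg) auto
  have P: "(\<Sum>u\<in>{u. u \<subseteq> {1..s} \<and> s \<in> u}. \<beta> u powr lam * Z ^ card u) = Z * T1"
  proof -
    have e: "{u. u \<subseteq> {1..s} \<and> s \<in> u} = insert s ` Pow J"
    proof (intro equalityI subsetI)
      fix u assume "u \<in> {u. u \<subseteq> {1..s} \<and> s \<in> u}"
      hence "u = insert s (u - {s})" "u - {s} \<in> Pow J" unfolding sJ by auto
      thus "u \<in> insert s ` Pow J" by blast
    next
      fix u assume "u \<in> insert s ` Pow J"
      thus "u \<in> {u. u \<subseteq> {1..s} \<and> s \<in> u}" unfolding sJ by auto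
    qed
    have inj: "inj_on (insert s) (Pow J)" using J unfolding inj_on_def
      by (metis Pow_iff insert_ident subset_iff)
    have "(\<Sum>u\<in>{u. u \<subseteq> {1..s} \<and> s \<in> u}. \<beta> u powr lam * Z ^ card u)
        = (\<Sum>u\<in>Pow J. \<beta> (insert s u) powr lam * Z ^ card (insert s u))"
      unfolding e using inj by (simp add: sum.reindex)
    also have "\<dots> = Z * T1" unfolding T1_def sum_distrib_left
    proof (intro sum.cong refl)
      fix u assume "u \<in> Pow J"
      hence "finite u" "s \<notin> u" using J finite_subset by auto
      thus "\<beta> (insert s u) powr lam * Z ^ card (insert s u) = Z * (\<beta> (insert s u) powr lam * Z ^ card u)" by simp
    qed
    finally show ?thesis .
  qed
  have T: "(\<Sum>u\<in>{u. u \<subseteq> {1..s}}. \<beta> u powr lam * Z ^ card u) = T0 + Z * T1"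
  proof -
    have e: "{u. u \<subseteq> {1..s}} = Pow J \<union> {u. u \<subseteq> {1..s} \<and> s \<in> u}" unfolding sJ using J by auto
    have "(\<Sum>u\<in>{u. u \<subseteq> {1..s}}. \<beta> u powr lam * Z ^ card u)
        = (\<Sum>u\<in>Pow J. \<beta> u powr lam * Z ^ card u) + (\<Sum>u\<in>{u. u \<subseteq> {1..s} \<and> s \<in> u}. \<beta> u powr lam * Z ^ card u)"
      unfolding e using J by (intro sum.union_disjoint) (auto simp: sJ)
    thus ?thesis using P unfolding T0_def by simp
  qed
  define K where "K = 2 powr (2 * p + 1) + 1"
  have K2: "2 \<le> K" unfolding K_def using p by (smt (verit) ge_one_powr_ge_zero)
  have Kp: "2 powr (p + 1) \<le> K" unfolding K_def using p by (smt (verit) powr_mono)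
  have B1: "Z * (2 * (\<Sum>h\<in>zbox J M. H0 h) * (\<Sum>h\<in>zbox J M. H1 h)) \<le> K * (Z * T1) * T0"
  proof -
    have "2 * (\<Sum>h\<in>zbox J M. H0 h) * (\<Sum>h\<in>zbox J M. H1 h) \<le> K * T0 * T1"
      using S0 S1 S0n S1n K2 T0n T1n by (intro mult_mono) auto
    hence "Z * (2 * (\<Sum>h\<in>zbox J M. H0 h) * (\<Sum>h\<in>zbox J M. H1 h)) \<le> Z * (K * T0 * T1)"
      using Z0 by (rule mult_left_mono)
    thus ?thesis by (simp add: mult.commute mult.left_commute)
  qed
  have B2: "2 powr (p + 1) * Z^2 * ((\<Sum>h\<in>zbox J M. H1 h) * (\<Sum>h\<in>zbox J M. H1 h)) \<le> K * (Z * T1) * (Z * T1)"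
  proof -
    have "2 powr (p + 1) * ((\<Sum>h\<in>zbox J M. H1 h) * (\<Sum>h\<in>zbox J M. H1 h)) \<le> K * (T1 * T1)"
      using S1 S1n Kp T1n K2 by (intro mult_mono) auto
    hence "Z^2 * (2 powr (p + 1) * ((\<Sum>h\<in>zbox J M. H1 h) * (\<Sum>h\<in>zbox J M. H1 h))) \<le> Z^2 * (K * (T1 * T1))"
      by (rule mult_left_mono) simp
    thus ?thesis by (simp add: power2_eq_square algebra_simps)
  qed
  have "(\<Sum>h\<in>zbox {1..s} M. \<Sum>k\<in>zbox {1..s} M. ?F h k) \<le> K * (Z * T1) * (T0 + Z * T1)"
    using A B1 B2 by (simp add: algebra_simps)
  thus ?thesis unfolding K_def using P T unfolding Z_def by simp
qed



lemma powr_add_le: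
  fixes a b q :: real
  assumes a: "a \<ge> 0" and b: "b \<ge> 0" and q: "0 < q" "q \<le> 1"
  shows "(a + b) powr q \<le> a powr q + b powr q"
proof (cases "a + b = 0")
  case True
  hence "a = 0" "b = 0" using a b by auto
  thus ?thesis by simp
next
  case False
  define S where "S = a + b"
  have S: "S > 0" using False a b unfolding S_def by simp
  have k: "x powr q \<ge> S powr q * (x / S)" if x: "0 \<le> x" "x \<le> S" for x
  proof -
    have "x / S \<le> (x / S) powr q"
    proof -
      have "(x / S) powr 1 \<le> (x / S) powr q"
        by (rule powr_mono') (use x S q in \<open>auto simp: divide_le_eq\<close>)
      thus ?thesis using x S by (simp add: powr_one)
    qed
    hence "S powr q * (x / S) \<le> S powr q * (x / S) powr q" by (rule mult_left_mono) simp
    also have "\<dots> = (S * (x / S)) powr q" by (rule powr_mult[symmetric])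
    also have "S * (x / S) = x" using S by simp
    finally show ?thesis .
  qed
  have "a powr q + b powr q \<ge> S powr q * (a / S) + S powr q * (b / S)"
    using k[of a] k[of b] a b unfolding S_def by (intro add_mono) auto
  also have "S powr q * (a / S) + S powr q * (b / S) = S powr q * ((a + b) / S)"
    by (simp add: add_divide_distrib distrib_left)
  also have "\<dots> = S powr q" using S unfolding S_def by simp
  finally show ?thesis unfolding S_def by simp
qed

lemma powr_sum_le:
  fixes f :: "'a \<Rightarrow> real"
  assumes "finite F" "\<And>x. x \<in> F \<Longrightarrow> f x \<ge> 0" "0 < q" "q \<le> 1"
  shows "(\<Sum>x\<in>F. f x) powr q \<le> (\<Sum>x\<in>F. f x powr q)"
  using assms
proof (induction F rule: finite_induct)
  case empty thus ?case by simp
next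
  case (insert y F)
  have "(\<Sum>x\<in>insert y F. f x) powr q = (f y + (\<Sum>x\<in>F. f x)) powr q" using insert.hyps by simp
  also have "\<dots> \<le> f y powr q + (\<Sum>x\<in>F. f x) powr q"
    using insert.prems by (intro powr_add_le sum_nonneg) auto
  also have "\<dots> \<le> f y powr q + (\<Sum>x\<in>F. f x powr q)" using insert by simp
  finally show ?case using insert.hyps by simp
qed

lemma infsum_powr_le:
  fixes G :: "'a \<Rightarrow> real"
  assumes G: "\<And>x. x \<in> S \<Longrightarrow> G x \<ge> 0" and q: "0 < q" "q \<le> 1"
    and sm: "(\<lambda>x. G x powr q) summable_on S"
  shows "(infsum G S) powr q \<le> infsum (\<lambda>x. G x powr q) S"
proof (cases "G summable_on S")
  case False
  thus ?thesis using infsum_nonneg[of S "\<lambda>x. G x powr q"] by (simp add: infsum_not_exists)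
next
  case True
  define B where "B = infsum (\<lambda>x. G x powr q) S"
  have B0: "B \<ge> 0" unfolding B_def by (rule infsum_nonneg) simp
  have "infsum G S \<le> B powr (1 / q)"
  proof (rule infsum_le_finite_sums[OF True])
    fix F assume F: "finite F" "F \<subseteq> S"
    have s0: "(\<Sum>x\<in>F. G x) \<ge> 0" using F G by (intro sum_nonneg) auto
    have "(\<Sum>x\<in>F. G x) powr q \<le> (\<Sum>x\<in>F. G x powr q)"
      using F G q by (intro powr_sum_le) auto
    also have "\<dots> \<le> B" unfolding B_def
      by (rule finite_sum_le_infsum[OF sm F]) simp
    finally have "((\<Sum>x\<in>F. G x) powr q) powr (1 / q) \<le> B powr (1 / q)"
      using q by (intro powr_mono2) auto
    also have "((\<Sum>x\<in>F. G x) powr q) powr (1 / q) = (\<Sum>x\<in>F. G x)"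
      using q s0 by (simp add: powr_powr powr_one)
    finally show "(\<Sum>x\<in>F. G x) \<le> B powr (1 / q)" .
  qed
  hence "(infsum G S) powr q \<le> (B powr (1 / q)) powr q"
    using q infsum_nonneg[of S G] G by (intro powr_mono2) auto
  also have "\<dots> = B" using q B0 by (simp add: powr_powr powr_one)
  finally show ?thesis unfolding B_def .
qed

lemma infsum_sum_finite:
  fixes f :: "'i \<Rightarrow> 'a \<Rightarrow> real"
  assumes "finite I" "\<And>i. i \<in> I \<Longrightarrow> f i summable_on A"
  shows "infsum (\<lambda>x. \<Sum>i\<in>I. f i x) A = (\<Sum>i\<in>I. infsum (f i) A)
         \<and> (\<lambda>x. \<Sum>i\<in>I. f i x) summable_on A"
  using assms
proof (induction I rule: finite_induct)
  case empty thus ?case by simp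
next
  case (insert j I)
  have IH: "infsum (\<lambda>x. \<Sum>i\<in>I. f i x) A = (\<Sum>i\<in>I. infsum (f i) A)"
       "(\<lambda>x. \<Sum>i\<in>I. f i x) summable_on A" using insert by auto
  have fj: "f j summable_on A" using insert.prems by simp
  have "infsum (\<lambda>x. \<Sum>i\<in>insert j I. f i x) A = infsum (\<lambda>x. f j x + (\<Sum>i\<in>I. f i x)) A"
    using insert.hyps by simp
  also have "\<dots> = infsum (f j) A + infsum (\<lambda>x. \<Sum>i\<in>I. f i x) A"
    by (rule infsum_add[OF fj IH(2)])
  finally have 1: "infsum (\<lambda>x. \<Sum>i\<in>insert j I. f i x) A = (\<Sum>i\<in>insert j I. infsum (f i) A)"
    using IH(1) insert.hyps by simp
  have "(\<lambda>x. f j x + (\<Sum>i\<in>I. f i x)) summable_on A" by (rule summable_on_add[OF fj IH(2)])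
  hence 2: "(\<lambda>x. \<Sum>i\<in>insert j I. f i x) summable_on A" using insert.hyps by simp
  show ?case using 1 2 by simp
qed

lemma wt_eq:
  "(\<beta> (supp_vec s h) / rprime s \<alpha> h) powr lam = wt s (\<alpha> * lam) lam \<beta> h"
proof -
  have "rprime s \<alpha> h powr lam = (\<Prod>j\<in>supp_vec s h. real_of_int \<bar>h j\<bar> powr (\<alpha> * lam))"
    unfolding rprime_def by (simp add: prod_powr_distrib powr_powr)
  moreover have "(\<Prod>j\<in>supp_vec s h. ap (\<alpha> * lam) (h j)) = inverse (\<Prod>j\<in>supp_vec s h. real_of_int \<bar>h j\<bar> powr (\<alpha> * lam))"
    unfolding ap_def powr_minus prod_inversef[symmetric] by (simp add: comp_def)
  ultimately show ?thesis unfolding wt_def powr_divide by (simp add: divide_inverse)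
qed



theorem lemma3:
  fixes n s :: nat and \<alpha> lam :: real and \<beta> :: "nat set \<Rightarrow> real" and z :: "nat \<Rightarrow> int"
  assumes "n \<ge> 2" and "\<alpha> > 1" and "s \<ge> 1"
    and "\<And>u. u \<subseteq> {1..s} \<Longrightarrow> \<beta> u \<ge> 0"
    and "\<And>j. j \<in> {1..s-1} \<Longrightarrow> z j \<in> Un_set n"
    and "1 / \<alpha> < lam" and "lam \<le> 1"
  shows "(1 / real (totient n)) * (\<Sum>zs\<in>Un_set n. (theta n s \<alpha> (z(s := zs)) \<beta>) powr lam)
     \<le> ((2 powr (2 * \<alpha> * lam + 1) + 1) / real (totient n)) *
        (\<Sum>u\<in>{u. u \<subseteq> {1..s} \<and> s \<in> u}. \<beta> u powr lam * (2 * zeta_real (\<alpha> * lam)) ^ card u) *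
        (\<Sum>u\<in>{u. u \<subseteq> {1..s}}. \<beta> u powr lam * (2 * zeta_real (\<alpha> * lam)) ^ card u)"
proof -
  note n = assms(1) and a1 = assms(2) and s = assms(3) and \<beta>0 = assms(4) and l1 = assms(6) and l2 = assms(7)
  define p where "p = \<alpha> * lam"
  have lam0: "lam > 0" using l1 a1 by (smt (verit) divide_pos_pos)
  have p1: "p > 1"
  proof -
    have "\<alpha> * (1 / \<alpha>) < \<alpha> * lam" using l1 a1 by (intro mult_strict_left_mono) auto
    thus ?thesis unfolding p_def using a1 by simp
  qed
  define U where "U = Un_set n"
  have U: "finite U" unfolding U_def by (rule Un_fin)
  define Sz where "Sz zs = {(h, l). h \<in> zvecs s \<and> l \<in> zvecs s \<and> l s \<noteq> 0 \<and>
                          (\<Sum>j=1..s. l j * (z(s := zs)) j) mod int n = 0}" for zs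
  define G where "G = (\<lambda>(h, l). (\<beta> (supp_vec s h) / rprime s \<alpha> h) *
        (\<beta> (supp_vec s (\<lambda>j. h j + l j)) / rprime s \<alpha> (\<lambda>j. h j + l j)))"
  have theta_eq: "theta n s \<alpha> (z(s := zs)) \<beta> = infsum G (Sz zs)" for zs
    unfolding theta_def G_def Sz_def by simp
  define Q where "Q = (\<lambda>(h::nat\<Rightarrow>int, l::nat\<Rightarrow>int). wt s p lam \<beta> h * wt s p lam \<beta> (\<lambda>j. h j + l j))"
  have GQ: "G q powr lam = Q q" for q
  proof (cases q)
    case (Pair a b)
    show ?thesis by (simp only: Pair G_def Q_def p_def case_prod_conv powr_mult wt_eq)
  qed
  have Qn: "Q q \<ge> 0" for q by (cases q) (simp add: Q_def wt_nonneg)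
  have rp: "rprime s \<alpha> h \<ge> 0" for h unfolding rprime_def by (intro prod_nonneg) simp
  have sv: "supp_vec s h \<subseteq> {1..s}" for h unfolding supp_vec_def by auto
  have Gn: "G q \<ge> 0" for q
    by (cases q) (auto simp: G_def intro!: mult_nonneg_nonneg divide_nonneg_nonneg \<beta>0 sv rp)
  define D where "D = zvecs s \<times> zvecs s"
  have SzD: "Sz zs \<subseteq> D" for zs unfolding Sz_def D_def by auto
  define \<Phi> where "\<Phi> zs q = (if q \<in> Sz zs then Q q else 0)" for zs q
  have \<Phi>n: "\<Phi> zs q \<ge> 0" for zs q unfolding \<Phi>_def using Qn by simp
  define Kb where "Kb = (2 powr (2 * p + 1) + 1) *
        (\<Sum>u\<in>{u. u \<subseteq> {1..s} \<and> s \<in> u}. \<beta> u powr lam * (2 * zeta_real p) ^ card u) *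
        (\<Sum>u\<in>{u. u \<subseteq> {1..s}}. \<beta> u powr lam * (2 * zeta_real p) ^ card u)"
  define \<Psi> where "\<Psi> = (\<lambda>(h::nat\<Rightarrow>int, k::nat\<Rightarrow>int). \<Sum>zs\<in>Un_set n.
            (if k s \<noteq> h s \<and> (\<Sum>j=1..s. (k j - h j) * (z(s := zs)) j) mod int n = 0
             then wt s p lam \<beta> h * wt s p lam \<beta> k else 0))"
  have \<Psi>n: "\<Psi> r \<ge> 0" for r
    by (cases r) (auto simp: \<Psi>_def wt_nonneg intro!: sum_nonneg mult_nonneg_nonneg)
  have FB: "(\<Sum>q\<in>F. \<Sum>zs\<in>U. \<Phi> zs q) \<le> Kb" if F: "finite F" "F \<subseteq> D" for F
  proof -
    define M where "M = (\<Sum>q\<in>F. \<Sum>j\<in>{1..s}. \<bar>fst q j\<bar> + \<bar>snd q j\<bar>)"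
    have M0: "M \<ge> 0" unfolding M_def by (intro sum_nonneg) auto
    have Mb: "\<bar>fst q j\<bar> + \<bar>snd q j\<bar> \<le> M" if q: "q \<in> F" and j: "j \<in> {1..s}" for q j
    proof -
      have "\<bar>fst q j\<bar> + \<bar>snd q j\<bar> \<le> (\<Sum>j\<in>{1..s}. \<bar>fst q j\<bar> + \<bar>snd q j\<bar>)"
        by (rule member_le_sum[OF j]) auto
      also have "\<dots> \<le> M" unfolding M_def
        by (rule member_le_sum[OF q, of "\<lambda>q. \<Sum>j\<in>{1..s}. \<bar>fst q j\<bar> + \<bar>snd q j\<bar>"]) (auto intro: sum_nonneg F)
      finally show ?thesis .
    qed
    define \<pi> where "\<pi> q = (fst q, \<lambda>j. fst q j + snd q j)" for q :: "(nat\<Rightarrow>int) \<times> (nat\<Rightarrow>int)"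
    have inj: "inj_on \<pi> F"
    proof (rule inj_onI)
      fix q q' assume "\<pi> q = \<pi> q'"
      hence "fst q = fst q'" "\<And>j. fst q j + snd q j = fst q' j + snd q' j"
        unfolding \<pi>_def by (auto dest: fun_cong)
      hence "fst q = fst q'" "snd q = snd q'" by (auto intro!: ext)
      thus "q = q'" by (simp add: prod_eq_iff)
    qed
    define B where "B = zbox {1..s} (2 * M)"
    have img: "\<pi> ` F \<subseteq> B \<times> B"
    proof
      fix r assume "r \<in> \<pi> ` F"
      then obtain q where q: "q \<in> F" and r: "r = \<pi> q" by blast
      have qD: "fst q \<in> zvecs s" "snd q \<in> zvecs s" using q F unfolding D_def by auto
      have "fst q \<in> B" unfolding B_def zbox_def
      proof (intro CollectI conjI ballI allI impI)
        fix j assume "j \<in> {1..s}" thus "\<bar>fst q j\<bar> \<le> 2 * M" using Mb[OF q] M0 by force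
      next
        fix j assume "j \<notin> {1..s}" thus "fst q j = 0" using qD unfolding zvecs_def by auto
      qed
      moreover have "(\<lambda>j. fst q j + snd q j) \<in> B" unfolding B_def zbox_def
      proof (intro CollectI conjI ballI allI impI)
        fix j assume "j \<in> {1..s}"
        hence "\<bar>fst q j\<bar> + \<bar>snd q j\<bar> \<le> M" by (rule Mb[OF q])
        thus "\<bar>fst q j + snd q j\<bar> \<le> 2 * M" using M0 by linarith
      next
        fix j assume "j \<notin> {1..s}" thus "fst q j + snd q j = 0" using qD unfolding zvecs_def by auto
      qed
      ultimately show "r \<in> B \<times> B" using r unfolding \<pi>_def by simp
    qed
    have eq: "(\<Sum>zs\<in>U. \<Phi> zs q) = \<Psi> (\<pi> q)" if q: "q \<in> F" for q
    proof -
      obtain h l where hl: "q = (h, l)" by (cases q)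
      have hD: "h \<in> zvecs s" "l \<in> zvecs s" using q F hl unfolding D_def by auto
      show ?thesis unfolding \<Psi>_def \<pi>_def \<Phi>_def Sz_def U_def Q_def hl using hD
        by (auto intro!: sum.cong)
    qed
    have "(\<Sum>q\<in>F. \<Sum>zs\<in>U. \<Phi> zs q) = (\<Sum>q\<in>F. \<Psi> (\<pi> q))" by (rule sum.cong) (simp_all add: eq)
    also have "\<dots> = (\<Sum>r\<in>\<pi> ` F. \<Psi> r)" by (simp add: sum.reindex[OF inj])
    also have "\<dots> \<le> (\<Sum>r\<in>B \<times> B. \<Psi> r)"
      by (rule sum_mono2) (use img \<Psi>n finite_box[of "{1..s}" "2 * M"] in \<open>auto simp: B_def\<close>)
    also have "\<dots> = (\<Sum>h\<in>B. \<Sum>k\<in>B. \<Psi> (h, k))" unfolding sum.cartesian_product by simp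
    also have "\<dots> \<le> Kb" unfolding B_def \<Psi>_def Kb_def
      using finite_main[OF n p1 s, where M="2 * M" and z=z and lam=lam and \<beta>=\<beta>] by simp
    finally show ?thesis .
  qed
  have sumQ: "Q summable_on Sz zs" if zs: "zs \<in> U" for zs
  proof (rule nonneg_bdd_above_summable_on)
    show "bdd_above (sum Q ` {F. F \<subseteq> Sz zs \<and> finite F})"
    proof (rule bdd_aboveI[of _ Kb], clarify)
      fix F assume F: "F \<subseteq> Sz zs" "finite F"
      have "sum Q F = (\<Sum>q\<in>F. \<Phi> zs q)" using F unfolding \<Phi>_def by (intro sum.cong) auto
      also have "\<dots> \<le> (\<Sum>q\<in>F. \<Sum>zs'\<in>U. \<Phi> zs' q)"
        by (intro sum_mono member_le_sum[OF zs] \<Phi>n U)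
      also have "\<dots> \<le> Kb" using FB[of F] F SzD[of zs] by auto
      finally show "sum Q F \<le> Kb" .
    qed
  qed (rule Qn)
  have sumPhi: "\<Phi> zs summable_on D" if zs: "zs \<in> U" for zs
  proof -
    have "\<Phi> zs summable_on D \<longleftrightarrow> Q summable_on Sz zs"
      by (rule summable_on_cong_neutral) (use SzD[of zs] in \<open>auto simp: \<Phi>_def\<close>)
    thus ?thesis using sumQ[OF zs] by simp
  qed
  have infPhi: "infsum Q (Sz zs) = infsum (\<Phi> zs) D" for zs
    using SzD[of zs] by (intro infsum_cong_neutral) (auto simp: \<Phi>_def)
  have step1: "(theta n s \<alpha> (z(s := zs)) \<beta>) powr lam \<le> infsum (\<Phi> zs) D" if zs: "zs \<in> U" for zs
  proof -
    have sm: "(\<lambda>x. G x powr lam) summable_on Sz zs" using sumQ[OF zs] by (simp add: GQ)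
    have "(infsum G (Sz zs)) powr lam \<le> infsum (\<lambda>x. G x powr lam) (Sz zs)"
      by (rule infsum_powr_le[OF _ lam0 l2 sm]) (rule Gn)
    thus ?thesis unfolding theta_eq GQ infPhi .
  qed
  have IS: "infsum (\<lambda>q. \<Sum>zs\<in>U. \<Phi> zs q) D = (\<Sum>zs\<in>U. infsum (\<Phi> zs) D)
         \<and> (\<lambda>q. \<Sum>zs\<in>U. \<Phi> zs q) summable_on D"
    by (rule infsum_sum_finite[OF U sumPhi])
  have main: "(\<Sum>zs\<in>Un_set n. (theta n s \<alpha> (z(s := zs)) \<beta>) powr lam) \<le> Kb"
  proof -
    have "(\<Sum>zs\<in>Un_set n. (theta n s \<alpha> (z(s := zs)) \<beta>) powr lam) \<le> (\<Sum>zs\<in>U. infsum (\<Phi> zs) D)"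
      unfolding U_def by (intro sum_mono step1) (simp add: U_def)
    also have "\<dots> = infsum (\<lambda>q. \<Sum>zs\<in>U. \<Phi> zs q) D" using IS by simp
    also have "\<dots> \<le> Kb"
      by (rule infsum_le_finite_sums) (use IS FB in auto)
    finally show ?thesis .
  qed
  have tot: "real (totient n) > 0" using n by simp
  have "(1 / real (totient n)) * (\<Sum>zs\<in>Un_set n. (theta n s \<alpha> (z(s := zs)) \<beta>) powr lam)
      \<le> (1 / real (totient n)) * Kb"
    using main tot by (intro mult_left_mono) auto
  also have "\<dots> = ((2 powr (2 * \<alpha> * lam + 1) + 1) / real (totient n)) *
        (\<Sum>u\<in>{u. u \<subseteq> {1..s} \<and> s \<in> u}. \<beta> u powr lam * (2 * zeta_real (\<alpha> * lam)) ^ card u) *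
        (\<Sum>u\<in>{u. u \<subseteq> {1..s}}. \<beta> u powr lam * (2 * zeta_real (\<alpha> * lam)) ^ card u)"
    unfolding Kb_def p_def by (simp add: mult.assoc)
  finally show ?thesis .
qed

end
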